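(* Let $m\ge0$ and let $\beta_m>0$ be a real number such that $c(h)\le\beta_m\|h\|$ for every $h\in\mathbb{R}[y]$ of degree at most $m$. For $i=1,\dots,k$, let $f_i,g_i\in\mathbb{R}[y]$ be of degree $\le m$, and let $f=\sum_{i=1}^kf_i^2$, $g=\sum_{i=1}^kg_i^2$. If $\epsilon\ge0$ is such that $c(g_i-f_i)\le\epsilon$ for $i=1,\dots,k$, then $$c(g-f)\le(m+1)k\epsilon\cdot\bigl(\epsilon+2\beta_m\sqrt{\|f\|}\bigr).$$
   Context: For a polynomial $h=\sum_{i}a_iy^i\in\mathbb{R}[y]$, $c(h)=\max_i|a_i|$ (maximum absolute value of the coefficients) and $\|h\|=\max\{|h(t)|: -1\le t\le 1\}$. *)

theory Defs
  imports "HOL-Analysis.Analysis" "HOL-Computational_Algebra.Polynomial"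
begin

definition coeff_max :: "real poly \<Rightarrow> real" where
  "coeff_max h = Max ((\<lambda>i. \<bar>coeff h i\<bar>) ` {0..degree h})"

definition sup_norm :: "real poly \<Rightarrow> real" where
  "sup_norm h = Sup ((\<lambda>t. \<bar>poly h t\<bar>) ` {-1..1})"

end

theory Submission
  imports Defs
begin

lemma cm_coeff: "\<bar>coeff p i\<bar> \<le> coeff_max p"
proof (cases "i \<le> degree p")
  case True
  then show ?thesis unfolding coeff_max_def by (intro Max_ge) auto
next
  case False
  then have "coeff p i = 0" by (simp add: coeff_eq_0)
  moreover have "\<bar>coeff p 0\<bar> \<le> coeff_max p" unfolding coeff_max_def by (intro Max_ge) auto
  ultimately show ?thesis by simp
qed

lemma cm_nonneg: "0 \<le> coeff_max p"
  using cm_coeff[of p 0] by simp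

lemma cm_le: assumes "\<And>i. \<bar>coeff p i\<bar> \<le> B" shows "coeff_max p \<le> B"
  unfolding coeff_max_def using assms by (subst Max_le_iff) auto

lemma cm_add: "coeff_max (p + q) \<le> coeff_max p + coeff_max q"
proof (rule cm_le)
  fix i
  have "\<bar>coeff (p+q) i\<bar> \<le> \<bar>coeff p i\<bar> + \<bar>coeff q i\<bar>" by (simp add: abs_triangle_ineq)
  also have "\<dots> \<le> coeff_max p + coeff_max q" using cm_coeff[of p i] cm_coeff[of q i] by simp
  finally show "\<bar>coeff (p+q) i\<bar> \<le> coeff_max p + coeff_max q" .
qed

lemma cm_sum: "coeff_max (\<Sum>i\<in>A. P i) \<le> (\<Sum>i\<in>A. coeff_max (P i))"
proof (induction A rule: infinite_finite_induct)
  case (infinite A) then show ?case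
    using cm_le[of 0 0] by simp
next
  case empty then show ?case using cm_le[of 0 0] by simp
next
  case (insert x F)
  then show ?case using cm_add[of "P x" "sum P F"] by simp
qed

lemma cm_mult: assumes "degree p \<le> m"
  shows "coeff_max (p * q) \<le> real (m+1) * coeff_max p * coeff_max q"
proof (rule cm_le)
  fix n
  have "\<bar>coeff (p*q) n\<bar> = \<bar>\<Sum>i\<le>n. coeff p i * coeff q (n-i)\<bar>" by (simp add: coeff_mult)
  also have "\<dots> = \<bar>\<Sum>i\<in>{..n}\<inter>{..m}. coeff p i * coeff q (n-i)\<bar>"
  proof -
    have "(\<Sum>i\<le>n. coeff p i * coeff q (n-i)) = (\<Sum>i\<in>{..n}\<inter>{..m}. coeff p i * coeff q (n-i))"
      using assms by (intro sum.mono_neutral_right) (auto simp: coeff_eq_0)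
    then show ?thesis by simp
  qed
  also have "\<dots> \<le> (\<Sum>i\<in>{..n}\<inter>{..m}. \<bar>coeff p i * coeff q (n-i)\<bar>)" by (rule sum_abs)
  also have "\<dots> \<le> (\<Sum>i\<in>{..n}\<inter>{..m}. coeff_max p * coeff_max q)"
    by (intro sum_mono) (simp add: abs_mult mult_mono cm_coeff cm_nonneg)
  also have "\<dots> = real (card ({..n}\<inter>{..m})) * (coeff_max p * coeff_max q)" by simp
  also have "\<dots> \<le> real (m+1) * (coeff_max p * coeff_max q)"
  proof (intro mult_right_mono)
    have "card ({..n}\<inter>{..m}) \<le> card {..m}" by (intro card_mono) auto
    then show "real (card ({..n}\<inter>{..m})) \<le> real (m+1)" by simp
  qed (simp add: cm_nonneg)
  finally show "\<bar>coeff (p*q) n\<bar> \<le> real (m+1) * coeff_max p * coeff_max q" by (simp add: mult.assoc)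
qed

lemma sn_upper: assumes "t \<in> {-1..1}" shows "\<bar>poly h t\<bar> \<le> sup_norm h"
proof -
  have "continuous_on {-1..1} (\<lambda>t. \<bar>poly h t\<bar>)" by (intro continuous_intros)
  then have "compact ((\<lambda>t. \<bar>poly h t\<bar>) ` {-1..1::real})"
    by (intro compact_continuous_image) auto
  then have "bdd_above ((\<lambda>t. \<bar>poly h t\<bar>) ` {-1..1::real})"
    by (intro bounded_imp_bdd_above compact_imp_bounded)
  then show ?thesis unfolding sup_norm_def using assms by (intro cSUP_upper) auto
qed

theorem lemma1p13:
  fixes m k :: nat and \<beta> \<epsilon> :: real and fs gs :: "nat \<Rightarrow> real poly"
  assumes "\<beta> > 0"
    and "\<And>h. degree h \<le> m \<Longrightarrow> coeff_max h \<le> \<beta> * sup_norm h"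
    and "\<And>i. i \<in> {1..k} \<Longrightarrow> degree (fs i) \<le> m"
    and "\<And>i. i \<in> {1..k} \<Longrightarrow> degree (gs i) \<le> m"
    and "\<epsilon> \<ge> 0"
    and "\<And>i. i \<in> {1..k} \<Longrightarrow> coeff_max (gs i - fs i) \<le> \<epsilon>"
  shows "coeff_max ((\<Sum>i=1..k. (gs i)^2) - (\<Sum>i=1..k. (fs i)^2))
           \<le> real (m + 1) * real k * \<epsilon> * (\<epsilon> + 2 * \<beta> * sqrt (sup_norm (\<Sum>i=1..k. (fs i)^2)))"
proof -
  define F where "F = (\<Sum>i=1..k. (fs i)^2)"
  define S where "S = sqrt (sup_norm F)"
  have snf: "sup_norm (fs i) \<le> S" if i: "i \<in> {1..k}" for i
    unfolding sup_norm_def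
  proof (rule cSUP_least)
    show "{-1..1::real} \<noteq> {}" by simp
    fix t :: real assume t: "t \<in> {-1..1}"
    have "(poly (fs i) t)^2 \<le> (\<Sum>j=1..k. (poly (fs j) t)^2)"
      using i by (intro member_le_sum) auto
    also have "\<dots> = poly F t" by (simp add: F_def poly_sum)
    also have "\<dots> \<le> sup_norm F" using sn_upper[OF t, of F] by simp
    finally have "(poly (fs i) t)^2 \<le> sup_norm F" .
    then have "sqrt ((poly (fs i) t)^2) \<le> S" unfolding S_def by (rule real_sqrt_le_mono)
    then show "\<bar>poly (fs i) t\<bar> \<le> S" by simp
  qed
  have eq: "(\<Sum>i=1..k. (gs i)^2) - F = (\<Sum>i=1..k. (gs i - fs i) * ((gs i - fs i) + fs i + fs i))"
    unfolding F_def sum_subtractf[symmetric]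
    by (intro sum.cong) (auto simp: power2_eq_square algebra_simps)
  have trm: "coeff_max ((gs i - fs i) * ((gs i - fs i) + fs i + fs i))
      \<le> real (m+1) * \<epsilon> * (\<epsilon> + 2 * \<beta> * S)" if i: "i \<in> {1..k}" for i
  proof -
    have dd: "degree (gs i - fs i) \<le> m"
      using assms(3,4)[OF i] degree_diff_le by blast
    have cf: "coeff_max (fs i) \<le> \<beta> * S"
      using assms(2)[OF assms(3)[OF i]] snf[OF i] assms(1)
      by (meson mult_left_mono less_imp_le order_trans)
    have c2: "coeff_max ((gs i - fs i) + fs i + fs i) \<le> \<epsilon> + 2 * \<beta> * S"
      using cm_add[of "(gs i - fs i) + fs i" "fs i"] cm_add[of "gs i - fs i" "fs i"]
        assms(6)[OF i] cf by linarith
    have "coeff_max ((gs i - fs i) * ((gs i - fs i) + fs i + fs i))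
        \<le> real (m+1) * coeff_max (gs i - fs i) * coeff_max ((gs i - fs i) + fs i + fs i)"
      by (rule cm_mult[OF dd])
    also have "\<dots> \<le> real (m+1) * \<epsilon> * (\<epsilon> + 2 * \<beta> * S)"
      using assms(6)[OF i] c2
      by (intro mult_mono) (auto simp: cm_nonneg assms(5))
    finally show ?thesis .
  qed
  have "coeff_max ((\<Sum>i=1..k. (gs i)^2) - F)
      \<le> (\<Sum>i=1..k. coeff_max ((gs i - fs i) * ((gs i - fs i) + fs i + fs i)))"
    unfolding eq by (rule cm_sum)
  also have "\<dots> \<le> (\<Sum>i=1..k. real (m+1) * \<epsilon> * (\<epsilon> + 2 * \<beta> * S))"
    by (intro sum_mono trm) auto
  also have "\<dots> = real (m + 1) * real k * \<epsilon> * (\<epsilon> + 2 * \<beta> * S)" by simp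
  finally show ?thesis unfolding F_def S_def .
qed

end
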